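(* Assume $CA_2$. Then there are two $\omega_1$-dense sets of reals which are not order isomorphic.
   Context: A set $A\subseteq\mathbb R$ is $\omega_1$-dense if $|(a,b)\cap A|=\omega_1$ for all reals $a<b$. A type is a sequence $\tau=\{(m_k,n_{k+1},r_{k+1})\}_{k\in\omega}$ of natural numbers with $m_0=1$; $n_k\ge2$ for $k\ge1$; every $r\in\omega$ equals $r_k$ for infinitely many $k$; $m_k>r_{k+1}$; and $m_{k+1}=r_{k+1}+(m_k-r_{k+1})n_{k+1}$ for all $k$. For a set of ordinals $X$ and $\mathcal F\subseteq[X]^{<\omega}$, $\mathcal F_k$ is the set of elements of rank $k$ in $(\mathcal F,\subsetneq)$; $A\sqsubseteq B$ means $A\subseteq B$ and every element of $B$ below an element of $A$ is in $A$; $A<B$ means every element of $A$ is below every element of $B$. $\mathcal F$ is a construction scheme over $X$ of type $\tau$ if (1) every finite subset of $X$ lies in a member of $\mathcal F$; (2) $|F|=m_k$ for $F\in\mathcal F_k$; (3) $E\cap F\sqsubseteq E,F$ for $E,F\in\mathcal F_k$; (4) each $F\in\mathcal F_{k+1}$ is the union of uniquely determined $F_0,\dots,F_{n_{k+1}-1}\in\mathcal F_k$ forming a $\Delta$-system with root $R(F)$, $|R(F)|=r_{k+1}$, $R(F)<F_0\setminus R(F)<\dots<F_{n_{k+1}-1}\setminus R(F)$. For a construction scheme $\mathcal F$ over $\omega_1$, $l\ge1$, $F\in\mathcal F_l$ and finite $\mathcal C\subseteq[\omega_1]^{<\omega}$: $F$ captures $\mathcal C$ if $|\mathcal C|\le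 n_l$ and $\mathcal C$ can be enumerated as $\{c_i\}_{i<|\mathcal C|}$ with $c_i\subseteq F_i$, $c_i\setminus R(F)\neq\emptyset$ and $\phi_i[c_0]=c_i$ where $\phi_i:F_0\to F_i$ is the increasing bijection. $\mathcal F$ is $n$-capturing if for every uncountable $S\subseteq[\omega_1]^{<\omega}$ and every $k\in\omega$ there are $\mathcal C\in[S]^n$, $l>k$ and $F\in\mathcal F_l$ capturing $\mathcal C$. $CA_n$ is the statement: for every type $\tau$ with $n\le n_k$ for all $k\ge1$ there is an $n$-capturing construction scheme over $\omega_1$ of type $\tau$. *)

theory Defs
  imports Complex_Main "HOL-Library.Equipollence" "HOL-Library.Countable_Set"
begin

text \<open>The ordinal omega_1 is represented by a type 'w of class wellorder which is
uncountable and all of whose proper initial segments are countable (see the theorem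
assumptions). A set has cardinality omega_1 iff it is equipollent to UNIV of that type.\<close>

definition omega1_dense :: "'w itself \<Rightarrow> real set \<Rightarrow> bool" where
  "omega1_dense W A \<longleftrightarrow>
     (\<forall>a b::real. a < b \<longrightarrow> ({a<..<b} \<inter> A) \<approx> (UNIV :: 'w set))"

definition order_isomorphic :: "real set \<Rightarrow> real set \<Rightarrow> bool" where
  "order_isomorphic A B \<longleftrightarrow> (\<exists>f. bij_betw f A B \<and> strict_mono_on A f)"

text \<open>A type tau = ((m_k, n_(k+1), r_(k+1)))_k is given by three sequences m, n, r;
the values n 0 and r 0 are irrelevant.\<close>

definition is_type :: "(nat \<Rightarrow> nat) \<Rightarrow> (nat \<Rightarrow> nat) \<Rightarrow> (nat \<Rightarrow> nat) \<Rightarrow> bool" where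
  "is_type m n r \<longleftrightarrow>
     m 0 = 1 \<and>
     (\<forall>k\<ge>1. n k \<ge> 2) \<and>
     (\<forall>x. infinite {k. k \<ge> 1 \<and> r k = x}) \<and>
     (\<forall>k. m k > r (Suc k)) \<and>
     (\<forall>k. m (Suc k) = r (Suc k) + (m k - r (Suc k)) * n (Suc k))"

definition set_less :: "'a::linorder set \<Rightarrow> 'a set \<Rightarrow> bool" where
  "set_less A B \<longleftrightarrow> (\<forall>a\<in>A. \<forall>b\<in>B. a < b)"

definition init_seg :: "'a::linorder set \<Rightarrow> 'a set \<Rightarrow> bool" where
  "init_seg A B \<longleftrightarrow> A \<subseteq> B \<and> (\<forall>b\<in>B. \<forall>a\<in>A. b < a \<longrightarrow> b \<in> A)"

definition chain_below :: "'a set set \<Rightarrow> 'a set \<Rightarrow> nat \<Rightarrow> bool" where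
  "chain_below \<F> X k \<longleftrightarrow>
     (\<exists>E :: nat \<Rightarrow> 'a set. (\<forall>i\<le>k. E i \<in> \<F>) \<and> (\<forall>i<k. E i \<subset> E (Suc i)) \<and> E k = X)"

definition level :: "'a set set \<Rightarrow> nat \<Rightarrow> 'a set set" where
  "level \<F> k = {X \<in> \<F>. chain_below \<F> X k \<and> \<not> chain_below \<F> X (Suc k)}"

text \<open>Fs is the (normalized) decomposition of F in F_(k+1) into F_0,...,F_(n_(k+1)-1)
in F_k with root R.\<close>
definition decomposition ::
  "'a::linorder set set \<Rightarrow> (nat \<Rightarrow> nat) \<Rightarrow> (nat \<Rightarrow> nat) \<Rightarrow> nat \<Rightarrow> 'a set
     \<Rightarrow> (nat \<Rightarrow> 'a set) \<Rightarrow> 'a set \<Rightarrow> bool" where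
  "decomposition \<F> n r k F Fs R \<longleftrightarrow>
     (\<forall>i\<ge>n (Suc k). Fs i = {}) \<and>
     (\<forall>i<n (Suc k). Fs i \<in> level \<F> k) \<and>
     F = (\<Union>i<n (Suc k). Fs i) \<and>
     (\<forall>i<n (Suc k). \<forall>j<n (Suc k). i \<noteq> j \<longrightarrow> Fs i \<inter> Fs j = R) \<and>
     card R = r (Suc k) \<and>
     set_less R (Fs 0 - R) \<and>
     (\<forall>i. Suc i < n (Suc k) \<longrightarrow> set_less (Fs i - R) (Fs (Suc i) - R))"

definition construction_scheme ::
  "'a::linorder set \<Rightarrow> (nat \<Rightarrow> nat) \<Rightarrow> (nat \<Rightarrow> nat) \<Rightarrow> (nat \<Rightarrow> nat) \<Rightarrow> 'a set set \<Rightarrow> bool" where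
  "construction_scheme X m n r \<F> \<longleftrightarrow>
     (\<forall>F\<in>\<F>. finite F \<and> F \<subseteq> X) \<and>
     (\<forall>A. finite A \<and> A \<subseteq> X \<longrightarrow> (\<exists>F\<in>\<F>. A \<subseteq> F)) \<and>
     (\<forall>k. \<forall>F\<in>level \<F> k. card F = m k) \<and>
     (\<forall>k. \<forall>E\<in>level \<F> k. \<forall>F\<in>level \<F> k. init_seg (E \<inter> F) E \<and> init_seg (E \<inter> F) F) \<and>
     (\<forall>k. \<forall>F\<in>level \<F> (Suc k). \<exists>!Fs. \<exists>R. decomposition \<F> n r k F Fs R)"

definition captures ::
  "'a::linorder set set \<Rightarrow> (nat \<Rightarrow> nat) \<Rightarrow> (nat \<Rightarrow> nat) \<Rightarrow> nat \<Rightarrow> 'a set \<Rightarrow> 'a set set \<Rightarrow> bool" where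
  "captures \<F> n r l F \<C> \<longleftrightarrow>
     l \<ge> 1 \<and> F \<in> level \<F> l \<and> finite \<C> \<and> card \<C> \<le> n l \<and>
     (\<exists>Fs R. decomposition \<F> n r (l - 1) F Fs R \<and>
        (\<exists>c :: nat \<Rightarrow> 'a set.
           bij_betw c {..<card \<C>} \<C> \<and>
           (\<forall>i<card \<C>. c i \<subseteq> Fs i \<and> c i - R \<noteq> {} \<and>
              (\<exists>\<phi>. bij_betw \<phi> (Fs 0) (Fs i) \<and> strict_mono_on (Fs 0) \<phi> \<and> \<phi> ` c 0 = c i))))"

definition n_capturing ::
  "nat \<Rightarrow> (nat \<Rightarrow> nat) \<Rightarrow> (nat \<Rightarrow> nat) \<Rightarrow> 'a::linorder set set \<Rightarrow> bool" where
  "n_capturing N n r \<F> \<longleftrightarrow>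
     (\<forall>S :: 'a set set. (\<forall>s\<in>S. finite s) \<and> uncountable S \<longrightarrow>
        (\<forall>k. \<exists>\<C> \<subseteq> S. finite \<C> \<and> card \<C> = N \<and>
              (\<exists>l>k. \<exists>F\<in>level \<F> l. captures \<F> n r l F \<C>)))"

definition CA :: "'w::linorder itself \<Rightarrow> nat \<Rightarrow> bool" where
  "CA W N \<longleftrightarrow>
     (\<forall>m n r. is_type m n r \<and> (\<forall>k\<ge>1. N \<le> n k) \<longrightarrow>
        (\<exists>\<F> :: 'w set set. construction_scheme UNIV m n r \<F> \<and> n_capturing N n r \<F>))"

end

theory Submission
  imports Defs
begin


definition rr :: "nat \<Rightarrow> nat" where "rr K = fst (prod_decode (K - 1))"
definition nn :: "nat \<Rightarrow> nat" where "nn K = 2"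
primrec mm :: "nat \<Rightarrow> nat" where
  "mm 0 = 1" | "mm (Suc k) = 2 * mm k - rr (Suc k)"

lemma rr_le: "rr (Suc k) \<le> k"
proof -
  have "fst (prod_decode k) \<le> prod_encode (prod_decode k)"
    by (metis le_prod_encode_1 prod.collapse)
  then show ?thesis by (simp add: rr_def)
qed

lemma mm_ge: "mm k \<ge> Suc k"
proof (induction k)
  case 0 then show ?case by simp
next
  case (Suc k)
  have "rr (Suc k) \<le> k" by (rule rr_le)
  then show ?case using Suc by simp
qed

lemma rr_lt: "rr (Suc k) < mm k"
  using rr_le[of k] mm_ge[of k] by simp

lemma mm_Suc: "mm (Suc k) = rr (Suc k) + (mm k - rr (Suc k)) * 2"
  using rr_lt[of k] by simp

lemma is_type_mnr: "is_type mm nn rr"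
proof -
  have inf: "infinite {k. k \<ge> 1 \<and> rr k = x}" for x
  proof -
    have "inj (\<lambda>b. Suc (prod_encode (x, b)))"
      by (auto simp: inj_def prod_encode_eq)
    then have "infinite (range (\<lambda>b. Suc (prod_encode (x, b))))"
      using finite_imageD by blast
    moreover have "range (\<lambda>b. Suc (prod_encode (x, b))) \<subseteq> {k. k \<ge> 1 \<and> rr k = x}"
      by (auto simp: rr_def)
    ultimately show ?thesis using finite_subset by blast
  qed
  show ?thesis unfolding is_type_def
    using inf rr_lt mm_Suc by (auto simp: nn_def)
qed



definition pos :: "'a::linorder set \<Rightarrow> 'a \<Rightarrow> nat" where
  "pos G a = card {y \<in> G. y < a}"

locale cs =
  fixes FF :: "'a::linorder set set"
  assumes cs: "construction_scheme UNIV mm nn rr FF"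
begin

lemma lvl_in: "F \<in> level FF k \<Longrightarrow> F \<in> FF"
  by (simp add: level_def)

lemma fin: "F \<in> FF \<Longrightarrow> finite F"
  using cs by (simp add: construction_scheme_def)

lemma card_lvl: "F \<in> level FF k \<Longrightarrow> card F = mm k"
  using cs by (simp add: construction_scheme_def)

lemma initseg: "E \<in> level FF k \<Longrightarrow> F \<in> level FF k \<Longrightarrow> init_seg (E \<inter> F) E"
  using cs by (simp add: construction_scheme_def)

lemma decomp_ex: "F \<in> level FF (Suc k) \<Longrightarrow> \<exists>Fs R. decomposition FF nn rr k F Fs R"
  using cs unfolding construction_scheme_def by (meson ex1_implies_ex)

lemma cover: "finite A \<Longrightarrow> \<exists>F\<in>FF. A \<subseteq> F"
  using cs by (simp add: construction_scheme_def)

lemma decomp_facts: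
  assumes "decomposition FF nn rr k F Fs R"
  shows "Fs 0 \<in> level FF k" "Fs 1 \<in> level FF k" "F = Fs 0 \<union> Fs 1" "Fs 0 \<inter> Fs 1 = R"
    "card R = rr (Suc k)" "set_less R (Fs 0 - R)" "set_less (Fs 0 - R) (Fs 1 - R)"
proof -
  have n2: "nn (Suc k) = 2" by (simp add: nn_def)
  have "{..<2::nat} = {0,1}" by auto
  then show "F = Fs 0 \<union> Fs 1" using assms n2 by (simp add: decomposition_def)
  show "Fs 0 \<in> level FF k" "Fs 1 \<in> level FF k" "Fs 0 \<inter> Fs 1 = R"
    "card R = rr (Suc k)" "set_less R (Fs 0 - R)" "set_less (Fs 0 - R) (Fs 1 - R)"
    using assms n2 unfolding decomposition_def by auto
qed

lemma block:
  assumes d: "decomposition FF nn rr j G Gs Q"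
  shows "Q \<subseteq> Gs 0" "Q \<subseteq> Gs 1" "finite (Gs 0)" "finite (Gs 1)" "finite G"
    "card (Gs 0) = mm j" "card (Gs 1) = mm j" "card Q = rr (Suc j)"
    "\<And>a b. a \<in> Gs 0 \<Longrightarrow> b \<in> Gs 1 - Q \<Longrightarrow> a < b"
    "\<And>a b. a \<in> Q \<Longrightarrow> b \<in> G - Q \<Longrightarrow> a < b"
proof -
  note f = decomp_facts[OF d]
  show q0: "Q \<subseteq> Gs 0" "Q \<subseteq> Gs 1" using f(4) by auto
  show fi: "finite (Gs 0)" "finite (Gs 1)" using f(1,2) lvl_in fin by auto
  then show "finite G" using f(3) by simp
  show c: "card (Gs 0) = mm j" "card (Gs 1) = mm j" "card Q = rr (Suc j)"
    using f card_lvl by auto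
  have "card Q < card (Gs 0)" using c rr_lt by simp
  moreover have "finite Q" using q0(1) fi(1) finite_subset by blast
  ultimately have "\<not> Gs 0 \<subseteq> Q" using card_mono[of Q "Gs 0"] by (meson card_mono leD)
  then obtain z where z: "z \<in> Gs 0 - Q" by blast
  show lt1: "\<And>a b. a \<in> Gs 0 \<Longrightarrow> b \<in> Gs 1 - Q \<Longrightarrow> a < b"
  proof -
    fix a b assume a: "a \<in> Gs 0" and b: "b \<in> Gs 1 - Q"
    show "a < b"
    proof (cases "a \<in> Q")
      case True
      then have "a < z" using f(6) z by (auto simp: set_less_def)
      also have "z < b" using f(7) z b by (auto simp: set_less_def)
      finally show ?thesis .
    next
      case False
      then show ?thesis using f(7) a b by (auto simp: set_less_def)
    qed
  qed
  show "\<And>a b. a \<in> Q \<Longrightarrow> b \<in> G - Q \<Longrightarrow> a < b"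
  proof -
    fix a b assume a: "a \<in> Q" and b: "b \<in> G - Q"
    show "a < b"
    proof (cases "b \<in> Gs 0")
      case True
      then show ?thesis using f(6) a b by (auto simp: set_less_def)
    next
      case False
      then have "b \<in> Gs 1 - Q" using b f(3) by auto
      then show ?thesis using lt1 a q0 by auto
    qed
  qed
qed

end


lemma pos_lt_card: "finite G \<Longrightarrow> a \<in> G \<Longrightarrow> pos G a < card G"
  unfolding pos_def by (rule psubset_card_mono) auto

lemma pos_mono:
  assumes "finite G" "b \<in> G" "a < b" "a \<in> G"
  shows "pos G a < pos G b"
proof -
  have "{y \<in> G. y < a} \<subseteq> {y \<in> G. y < b}" using assms(3) by (auto intro: less_trans)
  moreover have "a \<in> {y \<in> G. y < b}" "a \<notin> {y \<in> G. y < a}" using assms by auto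
  ultimately have "{y \<in> G. y < a} \<subset> {y \<in> G. y < b}" by blast
  then show ?thesis unfolding pos_def by (rule psubset_card_mono[rotated]) (use assms(1) in simp)
qed

lemma pos_iso:
  assumes "finite F0" "bij_betw \<phi> F0 F1" "strict_mono_on F0 \<phi>" "a \<in> F0"
  shows "pos F1 (\<phi> a) = pos F0 a"
proof -
  have inj: "inj_on \<phi> F0" using assms(2) bij_betw_def by blast
  have mono: "x \<in> F0 \<Longrightarrow> y \<in> F0 \<Longrightarrow> (\<phi> x < \<phi> y) = (x < y)" for x y
  proof
    assume "x \<in> F0" "y \<in> F0"
    show "x < y" if "\<phi> x < \<phi> y"
    proof (cases x y rule: linorder_cases)
      case greater
      then have "\<phi> y < \<phi> x" using strict_mono_onD[OF assms(3)] \<open>x \<in> F0\<close> \<open>y \<in> F0\<close> by blast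
      then show ?thesis using that by simp
    qed (use that in auto)
    show "\<phi> x < \<phi> y" if "x < y"
      using strict_mono_onD[OF assms(3)] \<open>x \<in> F0\<close> \<open>y \<in> F0\<close> that by blast
  qed
  have "{y \<in> F1. y < \<phi> a} = \<phi> ` {y \<in> F0. y < a}"
  proof
    show "{y \<in> F1. y < \<phi> a} \<subseteq> \<phi> ` {y \<in> F0. y < a}"
    proof
      fix y assume "y \<in> {y \<in> F1. y < \<phi> a}"
      then obtain z where "z \<in> F0" "y = \<phi> z" "\<phi> z < \<phi> a"
        using assms(2) by (auto simp: bij_betw_def)
      then show "y \<in> \<phi> ` {y \<in> F0. y < a}" using mono assms(4) by auto
    qed
    show "\<phi> ` {y \<in> F0. y < a} \<subseteq> {y \<in> F1. y < \<phi> a}"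
      using mono assms(2,4) by (auto simp: bij_betw_def)
  qed
  moreover have "inj_on \<phi> {y \<in> F0. y < a}" using inj by (rule inj_on_subset) auto
  ultimately show ?thesis unfolding pos_def by (simp add: card_image)
qed


context cs begin

lemma pos_wd:
  assumes "G \<in> level FF k" "G' \<in> level FF k" "a \<in> G" "a \<in> G'"
  shows "pos G a = pos G' a"
proof -
  have i1: "init_seg (G \<inter> G') G" using initseg assms by blast
  have i2: "init_seg (G' \<inter> G) G'" using initseg assms by blast
  have "{y \<in> G. y < a} = {y \<in> G'. y < a}"
    using i1 i2 assms(3,4) unfolding init_seg_def by blast
  then show ?thesis by (simp add: pos_def)
qed

lemma block_pos:
  assumes d: "decomposition FF nn rr j G Gs Q"
  shows "a \<in> Gs 0 \<Longrightarrow> pos (Gs 0) a = pos G a \<and> pos G a < mm j"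
    "a \<in> Gs 1 - Q \<Longrightarrow> mm j \<le> pos G a \<and> pos (Gs 1) a = pos G a - (mm j - rr (Suc j))"
    "a \<in> Q \<Longrightarrow> pos G a < rr (Suc j)"
    "a \<in> Gs 0 - Q \<Longrightarrow> rr (Suc j) \<le> pos G a"
proof -
  note f = decomp_facts[OF d]
  note b = block[OF d]
  show "pos (Gs 0) a = pos G a \<and> pos G a < mm j" if a: "a \<in> Gs 0"
  proof -
    have "y \<in> Gs 0" if "y \<in> G" "y < a" for y
    proof (rule ccontr)
      assume "y \<notin> Gs 0"
      then have "y \<in> Gs 1 - Q" using that f(3) f(4) by auto
      then have "a < y" by (rule b(9)[OF a])
      with that show False by simp
    qed
    then have "{y \<in> G. y < a} = {y \<in> Gs 0. y < a}"
      using f(3) by auto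
    then show ?thesis using pos_lt_card[OF b(3) a] b(6) by (simp add: pos_def)
  qed
  show "mm j \<le> pos G a \<and> pos (Gs 1) a = pos G a - (mm j - rr (Suc j))" if a: "a \<in> Gs 1 - Q"
  proof -
    define T where "T = {y \<in> Gs 1 - Q. y < a}"
    have fT: "finite T" using b(4) by (simp add: T_def)
    have fQ: "finite Q" using b(1,3) finite_subset by blast
    have e1: "{y \<in> G. y < a} = Gs 0 \<union> T"
      using f(3) b(9)[OF _ a] b(1) by (auto simp: T_def)
    have e2: "{y \<in> Gs 1. y < a} = Q \<union> T"
      using b(2) b(10)[of _ a] a f(3) by (auto simp: T_def)
    have "Gs 0 \<inter> T = {}" using f(4) by (auto simp: T_def)
    then have c1: "pos G a = mm j + card T"
      using e1 b(3,6) fT by (simp add: pos_def card_Un_disjoint)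
    have "Q \<inter> T = {}" by (auto simp: T_def)
    then have c2: "pos (Gs 1) a = rr (Suc j) + card T"
      using e2 b(8) fT fQ by (simp add: pos_def card_Un_disjoint)
    have "rr (Suc j) < mm j" by (rule rr_lt)
    then show ?thesis using c1 c2 by simp
  qed
  show "pos G a < rr (Suc j)" if a: "a \<in> Q"
  proof -
    have fQ: "finite Q" using b(1,3) finite_subset by blast
    have "{y \<in> G. y < a} \<subseteq> Q - {a}"
      using b(10)[OF a] by force
    then have "pos G a \<le> card (Q - {a})" unfolding pos_def using fQ by (simp add: card_mono)
    also have "\<dots> < card Q" using card_Diff1_less[OF fQ a] .
    finally show ?thesis using b(8) by simp
  qed
  show "rr (Suc j) \<le> pos G a" if a: "a \<in> Gs 0 - Q"
  proof -
    have "Q \<subseteq> {y \<in> G. y < a}" using b(10)[of _ a] b(1) a f(3) by auto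
    then have "card Q \<le> pos G a" unfolding pos_def using b(5) by (simp add: card_mono)
    then show ?thesis using b(8) by simp
  qed
qed

end


definition fl :: "nat \<Rightarrow> nat \<Rightarrow> nat" where
  "fl j p = (if p < rr j then 0 else if p < mm (j - 1) then 1 else 2)"

definition down :: "nat \<Rightarrow> nat \<Rightarrow> nat" where
  "down j p = (if p < mm j then p else p - (mm j - rr (Suc j)))"

primrec Dd :: "nat \<Rightarrow> nat \<Rightarrow> nat \<Rightarrow> nat" where
  "Dd 0 k p = 0"
| "Dd (Suc j) k p = (if k = Suc j then fl (Suc j) p else Dd j k (down j p))"

lemma fl_le: "fl j p \<le> 2" by (simp add: fl_def)

lemma Dd_inj: "p < mm j \<Longrightarrow> q < mm j \<Longrightarrow> p \<noteq> q \<Longrightarrow> \<exists>k. 1 \<le> k \<and> k \<le> j \<and> Dd j k p \<noteq> Dd j k q"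
proof (induction j arbitrary: p q)
  case 0
  then show ?case by simp
next
  case (Suc j)
  show ?case
  proof (cases "fl (Suc j) p = fl (Suc j) q")
    case False
    then show ?thesis by (intro exI[of _ "Suc j"]) simp
  next
    case True
    have lt: "rr (Suc j) < mm j" by (rule rr_lt)
    have ms: "mm (Suc j) = rr (Suc j) + (mm j - rr (Suc j)) * 2" by (rule mm_Suc)
    have "down j p < mm j \<and> down j q < mm j \<and> down j p \<noteq> down j q"
      using True Suc.prems lt ms unfolding fl_def down_def by (auto split: if_splits)
    then obtain k where k: "1 \<le> k" "k \<le> j" "Dd j k (down j p) \<noteq> Dd j k (down j q)"
      using Suc.IH by blast
    then show ?thesis by (intro exI[of _ k]) auto
  qed
qed

context cs begin

definition dig :: "nat \<Rightarrow> 'a \<Rightarrow> nat" where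
  "dig k a = fl k (pos (SOME G. G \<in> level FF k \<and> a \<in> G) a)"

lemma dig_le: "dig k a \<le> 2" by (simp add: dig_def fl_le)

lemma dig_eq: "G \<in> level FF k \<Longrightarrow> a \<in> G \<Longrightarrow> dig k a = fl k (pos G a)"
proof -
  assume G: "G \<in> level FF k" "a \<in> G"
  let ?G = "SOME G. G \<in> level FF k \<and> a \<in> G"
  have "?G \<in> level FF k \<and> a \<in> ?G" using G by (metis (mono_tags, lifting) someI)
  then have "pos ?G a = pos G a" using pos_wd G by blast
  then show ?thesis by (simp add: dig_def)
qed

lemma down_lemma:
  assumes "G \<in> level FF (Suc j)" "a \<in> G"
  shows "\<exists>G'. G' \<in> level FF j \<and> a \<in> G' \<and> pos G' a = down j (pos G a)"
proof -
  obtain Gs Q where d: "decomposition FF nn rr j G Gs Q" using decomp_ex[OF assms(1)] by blast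
  note f = decomp_facts[OF d]
  note bp = block_pos[OF d]
  show ?thesis
  proof (cases "a \<in> Gs 0")
    case True
    then show ?thesis using bp(1)[OF True] f(1) by (intro exI[of _ "Gs 0"]) (simp add: down_def)
  next
    case False
    then have a1: "a \<in> Gs 1 - Q" using assms(2) f(3,4) by auto
    then show ?thesis using bp(2)[OF a1] f(2) by (intro exI[of _ "Gs 1"]) (simp add: down_def)
  qed
qed

lemma L: "G \<in> level FF j \<Longrightarrow> a \<in> G \<Longrightarrow> 1 \<le> k \<Longrightarrow> k \<le> j \<Longrightarrow> dig k a = Dd j k (pos G a)"
proof (induction j arbitrary: G)
  case 0
  then show ?case by simp
next
  case (Suc j)
  show ?case
  proof (cases "k = Suc j")
    case True
    then show ?thesis using dig_eq[OF Suc.prems(1,2)] by simp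
  next
    case False
    obtain G' where G': "G' \<in> level FF j" "a \<in> G'" "pos G' a = down j (pos G a)"
      using down_lemma[OF Suc.prems(1,2)] by blast
    have "dig k a = Dd j k (pos G' a)" using Suc.IH[OF G'(1,2)] Suc.prems(3,4) False by simp
    then show ?thesis using G'(3) False by simp
  qed
qed

lemma chain_bound:
  assumes "chain_below FF F k" "F \<in> FF"
  shows "k \<le> card F"
proof -
  obtain E where E: "\<forall>i\<le>k. E i \<in> FF" "\<forall>i<k. E i \<subset> E (Suc i)" "E k = F"
    using assms(1) unfolding chain_below_def by blast
  have "i \<le> k \<Longrightarrow> i \<le> card (E i)" for i
  proof (induction i)
    case 0 then show ?case by simp
  next
    case (Suc i)
    have "finite (E (Suc i))" using E(1) Suc.prems fin by blast
    moreover have "E i \<subset> E (Suc i)" using E(2) Suc.prems by simp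
    ultimately have "card (E i) < card (E (Suc i))" by (simp add: psubset_card_mono)
    then show ?case using Suc by simp
  qed
  then show ?thesis using E(3) by auto
qed

lemma rank_ex:
  assumes "F \<in> FF"
  shows "\<exists>j. F \<in> level FF j"
proof -
  let ?P = "\<lambda>k. chain_below FF F k"
  have P0: "?P 0" unfolding chain_below_def using assms by (intro exI[of _ "\<lambda>_. F"]) simp
  have bd: "\<And>k. ?P k \<Longrightarrow> k \<le> card F" using chain_bound assms by blast
  define j where "j = (GREATEST k. ?P k)"
  have "?P j" unfolding j_def using GreatestI_nat[of ?P 0 "card F"] P0 bd by blast
  moreover have "\<not> ?P (Suc j)"
  proof
    assume "?P (Suc j)"
    then have "Suc j \<le> (GREATEST k. ?P k)" using Greatest_le_nat[of ?P "Suc j" "card F"] bd by blast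
    then show False by (simp add: j_def)
  qed
  ultimately show ?thesis using assms by (auto simp: level_def)
qed

end


lemma bounded_summ:
  assumes "\<And>i. \<bar>c i\<bar> \<le> (2::real)"
  shows "summable (\<lambda>i. c i * (1/4::real)^i)"
proof (rule summable_comparison_test)
  show "\<exists>N. \<forall>n\<ge>N. norm (c n * (1/4::real)^n) \<le> 2 * (1/4)^n"
    using assms by (auto simp: abs_mult intro!: mult_right_mono)
  show "summable (\<lambda>n. 2 * (1/4::real)^n)"
    by (intro summable_mult summable_geometric) simp
qed

lemma pos0:
  assumes "\<And>i. \<bar>c i\<bar> \<le> (2::real)" "c 0 \<ge> 1"
  shows "suminf (\<lambda>i. c i * (1/4::real)^i) > 0"
proof -
  define f where "f = (\<lambda>i. c i * (1/4::real)^i)"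
  have sf: "summable f" unfolding f_def by (rule bounded_summ[OF assms(1)])
  have sf1: "summable (\<lambda>i. f (Suc i))" using sf by (simp add: summable_Suc_iff)
  have g: "summable (\<lambda>i. (1/4::real)^i)" by (rule summable_geometric) simp
  have gs: "suminf (\<lambda>i. (1/4::real)^i) = 4/3" using suminf_geometric[of "1/4::real"] by simp
  have sg: "summable (\<lambda>i. - (1/2) * (1/4::real)^i)" using g by (rule summable_mult)
  have le: "- (1/2) * (1/4::real)^i \<le> f (Suc i)" for i
  proof -
    have "-2 \<le> c (Suc i)" using assms(1)[of "Suc i"] by linarith
    then have "-2 * (1/4::real)^Suc i \<le> c (Suc i) * (1/4)^Suc i"
      by (intro mult_right_mono) auto
    then show ?thesis by (simp add: f_def)
  qed
  have "suminf (\<lambda>i. - (1/2) * (1/4::real)^i) \<le> suminf (\<lambda>i. f (Suc i))"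
    by (rule suminf_le[OF le sg sf1])
  moreover have "suminf (\<lambda>i. - (1/2) * (1/4::real)^i) = - 2/3"
    using suminf_mult[OF g, of "-(1/2)"] gs by simp
  moreover have "suminf (\<lambda>i. f (Suc i)) = suminf f - f 0" by (rule suminf_split_head[OF sf])
  moreover have "f 0 \<ge> 1" using assms(2) by (simp add: f_def)
  ultimately have "suminf f > 0" by linarith
  then show ?thesis by (simp add: f_def)
qed

lemma posn:
  assumes "\<And>i. \<bar>c i\<bar> \<le> (2::real)" "\<And>i. i < n \<Longrightarrow> c i = 0" "c n \<ge> 1"
  shows "suminf (\<lambda>i. c i * (1/4::real)^i) > 0"
proof -
  define f where "f = (\<lambda>i. c i * (1/4::real)^i)"
  have sf: "summable f" unfolding f_def by (rule bounded_summ[OF assms(1)])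
  have "suminf f = (\<Sum>i. f (i + n)) + sum f {..<n}" by (rule suminf_split_initial_segment[OF sf])
  moreover have "sum f {..<n} = 0" using assms(2) by (simp add: f_def)
  moreover have "(\<lambda>i. f (i + n)) = (\<lambda>i. (1/4)^n * (c (i + n) * (1/4::real)^i))"
    by (simp add: f_def power_add fun_eq_iff)
  moreover have "summable (\<lambda>i. c (i + n) * (1/4::real)^i)"
    by (rule bounded_summ) (use assms(1) in blast)
  moreover have "suminf (\<lambda>i. c (i + n) * (1/4::real)^i) > 0"
    by (rule pos0) (use assms(1,3) in auto)
  ultimately have "suminf f > 0" by (simp add: suminf_mult)
  then show ?thesis by (simp add: f_def)
qed

definition xv :: "(nat \<Rightarrow> nat) \<Rightarrow> real" where
  "xv d = suminf (\<lambda>i. real (d (Suc i)) * (1/4::real)^i)"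

lemma lex:
  assumes "\<And>k. d k \<le> 2" "\<And>k. e k \<le> 2" "1 \<le> l"
    "\<And>k. 1 \<le> k \<Longrightarrow> k < l \<Longrightarrow> d k = e k" "d l < e l"
  shows "xv d < xv e"
proof -
  have b: "\<bar>real (d k)\<bar> \<le> 2" "\<bar>real (e k)\<bar> \<le> 2" for k using assms(1,2)[of k] by auto
  have sd: "summable (\<lambda>i. real (d (Suc i)) * (1/4::real)^i)" by (rule bounded_summ) (use b in auto)
  have se: "summable (\<lambda>i. real (e (Suc i)) * (1/4::real)^i)" by (rule bounded_summ) (use b in auto)
  define c where "c i = real (e (Suc i)) - real (d (Suc i))" for i
  have "xv e - xv d = suminf (\<lambda>i. c i * (1/4::real)^i)"
    unfolding xv_def c_def using suminf_diff[OF se sd] by (simp add: left_diff_distrib)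
  moreover have "suminf (\<lambda>i. c i * (1/4::real)^i) > 0"
  proof (rule posn[where n = "l - 1"])
    show "\<bar>c i\<bar> \<le> 2" for i using assms(1,2)[of "Suc i"] by (simp add: c_def)
    show "c i = 0" if "i < l - 1" for i using assms(4)[of "Suc i"] that by (simp add: c_def)
    show "1 \<le> c (l - 1)" using assms(3,5) by (simp add: c_def)
  qed
  ultimately show ?thesis by simp
qed

lemma xv_inj:
  assumes "\<And>k. d k \<le> 2" "\<And>k. e k \<le> 2" "1 \<le> k0" "d k0 \<noteq> e k0"
  shows "xv d \<noteq> xv e"
proof -
  define l where "l = (LEAST k. 1 \<le> k \<and> d k \<noteq> e k)"
  have l: "1 \<le> l" "d l \<noteq> e l" using LeastI[of "\<lambda>k. 1 \<le> k \<and> d k \<noteq> e k" k0] assms(3,4)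
    by (auto simp: l_def)
  have eq: "\<And>k. 1 \<le> k \<Longrightarrow> k < l \<Longrightarrow> d k = e k"
    using not_less_Least l_def by blast
  show ?thesis
  proof (cases "d l < e l")
    case True
    have "xv d < xv e" by (rule lex[OF assms(1,2) l(1)]) (use eq True in auto)
    then show ?thesis by simp
  next
    case False
    then have "e l < d l" using l(2) by simp
    have "xv e < xv d" by (rule lex[OF assms(2,1) l(1)]) (use eq \<open>e l < d l\<close> in auto)
    then show ?thesis by simp
  qed
qed


lemma xv_range:
  assumes "\<And>k. d k \<le> 2"
  shows "0 \<le> xv d" "xv d \<le> 3"
proof -
  have b: "\<bar>real (d k)\<bar> \<le> 2" for k using assms[of k] by auto
  have sd: "summable (\<lambda>i. real (d (Suc i)) * (1/4::real)^i)" by (rule bounded_summ) (use b in auto)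
  show "0 \<le> xv d" unfolding xv_def by (rule suminf_nonneg[OF sd]) simp
  have g: "summable (\<lambda>i. (1/4::real)^i)" by (rule summable_geometric) simp
  have gs: "suminf (\<lambda>i. (1/4::real)^i) = 4/3" using suminf_geometric[of "1/4::real"] by simp
  have sg: "summable (\<lambda>i. 2 * (1/4::real)^i)" using g by (rule summable_mult)
  have "xv d \<le> suminf (\<lambda>i. 2 * (1/4::real)^i)" unfolding xv_def
    by (rule suminf_le[OF _ sd sg]) (use assms in \<open>auto intro!: mult_right_mono\<close>)
  also have "\<dots> = 8/3" using suminf_mult[OF g, of 2] gs by simp
  finally show "xv d \<le> 3" by simp
qed



context cs begin

definition xx :: "'a \<Rightarrow> real" where "xx a = xv (\<lambda>k. dig k a)"

lemma root_fix:
  assumes d: "decomposition FF nn rr j F Fs R"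
    and phi: "bij_betw \<phi> (Fs 0) (Fs 1)" "strict_mono_on (Fs 0) \<phi>"
    and rR: "\<rho> \<in> R"
  shows "\<phi> \<rho> = \<rho>"
proof -
  note f = decomp_facts[OF d]
  note b = block[OF d]
  have r0: "\<rho> \<in> Fs 0" "\<rho> \<in> Fs 1" using rR b(1,2) by auto
  have s0: "{y \<in> Fs 0. y < \<rho>} = {y \<in> R. y < \<rho>}"
  proof -
    have "y \<in> R" if "y \<in> Fs 0" "y < \<rho>" for y
    proof (rule ccontr)
      assume "y \<notin> R"
      then have "\<rho> < y" using b(10)[OF rR, of y] that f(3) by auto
      with that show False by simp
    qed
    then show ?thesis using b(1) by auto
  qed
  have s1: "{y \<in> Fs 1. y < \<rho>} = {y \<in> R. y < \<rho>}"
  proof -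
    have "y \<in> R" if "y \<in> Fs 1" "y < \<rho>" for y
    proof (rule ccontr)
      assume "y \<notin> R"
      then have "\<rho> < y" using b(10)[OF rR, of y] that f(3) by auto
      with that show False by simp
    qed
    then show ?thesis using b(2) by auto
  qed
  have "pos (Fs 1) (\<phi> \<rho>) = pos (Fs 0) \<rho>" by (rule pos_iso[OF b(3) phi r0(1)])
  also have "\<dots> = pos (Fs 1) \<rho>" using s0 s1 by (simp add: pos_def)
  finally have e: "pos (Fs 1) (\<phi> \<rho>) = pos (Fs 1) \<rho>" .
  have pr: "\<phi> \<rho> \<in> Fs 1" using phi(1) r0(1) bij_betwE by blast
  show ?thesis
  proof (cases "\<phi> \<rho>" \<rho> rule: linorder_cases)
    case less
    then show ?thesis using pos_mono[OF b(4) r0(2) less pr] e by simp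
  next
    case greater
    then show ?thesis using pos_mono[OF b(4) pr greater r0(2)] e by simp
  qed
qed

lemma transport:
  assumes F: "F \<in> level FF (Suc j)"
    and d: "decomposition FF nn rr j F Fs R"
    and phi: "bij_betw \<phi> (Fs 0) (Fs 1)" "strict_mono_on (Fs 0) \<phi>"
    and g: "\<gamma> \<in> Fs 0 - R"
  shows "\<phi> \<gamma> \<in> Fs 1 - R" "xx \<gamma> < xx (\<phi> \<gamma>)"
proof -
  note f = decomp_facts[OF d]
  note b = block[OF d]
  note bp = block_pos[OF d]
  have inj: "inj_on \<phi> (Fs 0)" using phi(1) bij_betw_def by blast
  have pg: "\<phi> \<gamma> \<in> Fs 1" using phi(1) g bij_betwE by blast
  show pg1: "\<phi> \<gamma> \<in> Fs 1 - R"
  proof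
    show "\<phi> \<gamma> \<notin> R"
    proof
      assume "\<phi> \<gamma> \<in> R"
      then have "\<phi> (\<phi> \<gamma>) = \<phi> \<gamma>" "\<phi> \<gamma> \<in> Fs 0" using root_fix[OF d phi] b(1) by auto
      then have "\<phi> \<gamma> = \<gamma>" using inj g by (meson DiffD1 inj_onD)
      then show False using \<open>\<phi> \<gamma> \<in> R\<close> g by simp
    qed
  qed (rule pg)
  have gF: "\<gamma> \<in> F" "\<phi> \<gamma> \<in> F" using g pg f(3) by auto
  have pe: "pos (Fs 1) (\<phi> \<gamma>) = pos (Fs 0) \<gamma>" using pos_iso[OF b(3) phi] g by blast
  have eqd: "dig k \<gamma> = dig k (\<phi> \<gamma>)" if "1 \<le> k" "k < Suc j" for k
  proof -
    have "dig k \<gamma> = Dd j k (pos (Fs 0) \<gamma>)" using L[OF f(1)] g that by auto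
    moreover have "dig k (\<phi> \<gamma>) = Dd j k (pos (Fs 1) (\<phi> \<gamma>))" using L[OF f(2)] pg that by auto
    ultimately show ?thesis using pe by simp
  qed
  have lt: "rr (Suc j) < mm j" by (rule rr_lt)
  have d1: "dig (Suc j) \<gamma> = 1"
    using dig_eq[OF F gF(1)] bp(1)[of \<gamma>] bp(4)[OF g] g by (simp add: fl_def)
  have d2: "dig (Suc j) (\<phi> \<gamma>) = 2"
    using dig_eq[OF F gF(2)] bp(2)[OF pg1] lt by (simp add: fl_def)
  show "xx \<gamma> < xx (\<phi> \<gamma>)" unfolding xx_def
    by (rule lex[where l = "Suc j"]) (use dig_le eqd d1 d2 in auto)
qed

lemma xx_inj: "inj xx"
proof (rule injI)
  fix a b assume e: "xx a = xx b"
  show "a = b"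
  proof (rule ccontr)
    assume ne: "a \<noteq> b"
    obtain F where F: "F \<in> FF" "{a, b} \<subseteq> F" using cover[of "{a, b}"] by auto
    obtain j where j: "F \<in> level FF j" using rank_ex[OF F(1)] by blast
    have fF: "finite F" using fin F(1) by blast
    have "pos F a \<noteq> pos F b"
    proof (cases a b rule: linorder_cases)
      case less then show ?thesis using pos_mono[OF fF _ less] F(2) by fastforce
    next
      case greater then show ?thesis using pos_mono[OF fF _ greater] F(2) by fastforce
    qed (use ne in simp)
    moreover have "pos F a < mm j" "pos F b < mm j"
      using pos_lt_card[OF fF] F(2) card_lvl[OF j] by auto
    ultimately obtain k where k: "1 \<le> k" "k \<le> j" "Dd j k (pos F a) \<noteq> Dd j k (pos F b)"
      using Dd_inj by blast
    have "dig k a \<noteq> dig k b" using L[OF j _ k(1,2)] F(2) k(3) by auto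
    then have "xx a \<noteq> xx b" unfolding xx_def by (rule xv_inj[OF dig_le dig_le k(1)])
    then show False using e by simp
  qed
qed

lemma xx_range: "0 \<le> xx a" "xx a \<le> 3"
  unfolding xx_def using xv_range[OF dig_le] by auto

end


lemma pair_eq:
  fixes a b c d :: "'a::linorder"
  assumes "{a, b} = {c, d}" "a < b" "c < d"
  shows "a = c \<and> b = d"
  using assms unfolding doubleton_eq_iff by auto

context cs begin

lemma core:
  assumes cap: "n_capturing 2 nn rr FF"
    and D: "uncountable D"
    and uv: "\<And>a. a \<in> D \<Longrightarrow> u a < v a"
    and iu: "inj_on u D" and iv: "inj_on v D"
    and nb: "\<And>a a'. a \<in> D \<Longrightarrow> a' \<in> D \<Longrightarrow> a \<noteq> a' \<Longrightarrow> \<not> (xx (u a) < xx (u a') \<and> xx (v a) < xx (v a'))"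
  shows False
proof -
  define S where "S = (\<lambda>a. {u a, v a}) ` D"
  have ip: "inj_on (\<lambda>a. {u a, v a}) D"
  proof (rule inj_onI)
    fix a a' assume "a \<in> D" "a' \<in> D" "{u a, v a} = {u a', v a'}"
    then have "u a = u a'" using pair_eq uv by blast
    then show "a = a'" using iu \<open>a \<in> D\<close> \<open>a' \<in> D\<close> inj_onD by metis
  qed
  have "uncountable S"
  proof
    assume "countable S"
    then have "countable D" unfolding S_def using ip countable_image_inj_on by blast
    then show False using D by simp
  qed
  moreover have "\<forall>s\<in>S. finite s" by (auto simp: S_def)
  ultimately have fu: "(\<forall>s\<in>S. finite s) \<and> uncountable S" by blast
  have "(\<forall>s\<in>S. finite s) \<and> uncountable S \<longrightarrow> (\<forall>k. \<exists>\<C> \<subseteq> S. finite \<C> \<and> card \<C> = 2 \<and> (\<exists>l>k. \<exists>F\<in>level FF l. captures FF nn rr l F \<C>))"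
    using cap unfolding n_capturing_def by (rule spec)
  then have "\<forall>k. \<exists>\<C> \<subseteq> S. finite \<C> \<and> card \<C> = 2 \<and> (\<exists>l>k. \<exists>F\<in>level FF l. captures FF nn rr l F \<C>)"
    using fu by (rule mp)
  then have "\<exists>\<C> \<subseteq> S. finite \<C> \<and> card \<C> = 2 \<and> (\<exists>l>0. \<exists>F\<in>level FF l. captures FF nn rr l F \<C>)"
    by (rule spec)
  then obtain C l F where C: "C \<subseteq> S" "finite C" "card C = 2" "l > 0" "F \<in> level FF l"
      "captures FF nn rr l F C"
    by (elim exE conjE bexE) 
  obtain j where lj: "l = Suc j" using C(4) gr0_implies_Suc by blast
  have "\<exists>Fs R. decomposition FF nn rr (l - 1) F Fs R \<and>
        (\<exists>c :: nat \<Rightarrow> 'a set.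
           bij_betw c {..<card C} C \<and>
           (\<forall>i<card C. c i \<subseteq> Fs i \<and> c i - R \<noteq> {} \<and>
              (\<exists>\<phi>. bij_betw \<phi> (Fs 0) (Fs i) \<and> strict_mono_on (Fs 0) \<phi> \<and> \<phi> ` c 0 = c i)))"
    using C(6) unfolding captures_def by (elim conjE)
  then obtain Fs R c where d: "decomposition FF nn rr j F Fs R" and cb: "bij_betw c {..<2} C"
    and cc: "\<forall>i<2. c i \<subseteq> Fs i \<and> c i - R \<noteq> {} \<and>
              (\<exists>\<phi>. bij_betw \<phi> (Fs 0) (Fs i) \<and> strict_mono_on (Fs 0) \<phi> \<and> \<phi> ` c 0 = c i)"
    unfolding C(3) lj by (elim exE conjE) simp
  obtain \<phi> where phi: "bij_betw \<phi> (Fs 0) (Fs 1)" "strict_mono_on (Fs 0) \<phi>" "\<phi> ` c 0 = c 1"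
    using cc[rule_format, of 1] by simp blast
  have c0s: "c 0 \<subseteq> Fs 0" using cc[rule_format, of 0] by simp
  have "c 0 \<in> S" "c 1 \<in> S" using cb C(1) by (auto simp: bij_betw_def)
  then obtain a a' where a: "a \<in> D" "c 0 = {u a, v a}" and a': "a' \<in> D" "c 1 = {u a', v a'}"
    by (auto simp: S_def)
  have injc: "inj_on c {..<2}" using cb bij_betw_def by blast
  have "c 0 \<noteq> c 1"
  proof
    assume "c 0 = c 1"
    then have "(0::nat) = 1" using inj_onD[OF injc, of 0 1] by simp
    then show False by simp
  qed
  then have ne: "a \<noteq> a'" using a a' by auto
  have ins: "u a \<in> Fs 0" "v a \<in> Fs 0" using c0s a(2) by auto
  have "\<phi> (u a) < \<phi> (v a)" using strict_mono_onD[OF phi(2) ins uv[OF a(1)]] .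
  moreover have "{\<phi> (u a), \<phi> (v a)} = {u a', v a'}" using phi(3) a(2) a'(2) by simp
  ultimately have pe: "\<phi> (u a) = u a'" "\<phi> (v a) = v a'" using pair_eq[of "\<phi> (u a)" "\<phi> (v a)" "u a'" "v a'"] uv[OF a'(1)] by auto
  have F: "F \<in> level FF (Suc j)" using C(5) lj by simp
  show False
  proof (cases "u a \<in> R \<or> v a \<in> R")
    case True
    then show ?thesis
    proof
      assume "u a \<in> R"
      then have "u a = u a'" using root_fix[OF d phi(1,2)] pe by metis
      then show False using iu a(1) a'(1) ne inj_onD by metis
    next
      assume "v a \<in> R"
      then have "v a = v a'" using root_fix[OF d phi(1,2)] pe by metis
      then show False using iv a(1) a'(1) ne inj_onD by metis
    qed
  next
    case False
    then have "u a \<in> Fs 0 - R" "v a \<in> Fs 0 - R" using ins by auto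
    then have "xx (u a) < xx (u a')" "xx (v a) < xx (v a')"
      using transport(2)[OF F d phi(1,2)] pe by metis+
    then show False using nb[OF a(1) a'(1) ne] by simp
  qed
qed

end


definition PP :: "(rat \<times> rat) set" where "PP = {i. fst i < snd i}"

definition ee :: "rat \<times> rat \<Rightarrow> real \<Rightarrow> real" where
  "ee i y = of_rat (fst i) + (of_rat (snd i) - of_rat (fst i)) * (y + 1) / 5"

lemma ee_mono: "i \<in> PP \<Longrightarrow> y < z \<Longrightarrow> ee i y < ee i z"
  unfolding ee_def PP_def by (auto intro!: mult_strict_left_mono divide_strict_right_mono simp: of_rat_less)

lemma ee_mono_iff: "i \<in> PP \<Longrightarrow> (ee i y < ee i z) = (y < z)"
  by (metis ee_mono less_asym linorder_neq_iff)

lemma ee_inj: "i \<in> PP \<Longrightarrow> inj (ee i)"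
  by (metis ee_mono injI linorder_neq_iff)

lemma ee_range:
  assumes "i \<in> PP" "0 \<le> y" "y \<le> 3"
  shows "of_rat (fst i) < ee i y" "ee i y < of_rat (snd i)"
proof -
  have d: "0 < of_rat (snd i) - (of_rat (fst i) :: real)" using assms(1) by (simp add: PP_def of_rat_less)
  have "0 < (of_rat (snd i) - of_rat (fst i)) * (y + 1) / 5" using d assms(2) by simp
  then show "of_rat (fst i) < ee i y" by (simp add: ee_def)
  have "(of_rat (snd i) - of_rat (fst i)) * ((y + 1) / 5) < (of_rat (snd i) - of_rat (fst i)) * 1"
    by (rule mult_strict_left_mono) (use assms(3) d in auto)
  then show "ee i y < of_rat (snd i)" by (simp add: ee_def)
qed

lemma countable_PP: "countable PP" by simp

lemma infinite_times_self:
  assumes "infinite (UNIV :: 'w set)"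
  shows "(UNIV :: 'w set) \<times> (UNIV :: 'w set) \<lesssim> (UNIV :: 'w set)"
proof -
  have "(UNIV :: 'w set) \<times> (UNIV :: 'w set) \<approx> (UNIV :: 'w set)"
    unfolding eqpoll_iff_card_of_ordIso using card_of_Times_same_infinite[of "UNIV :: 'w set"] assms by blast
  then show ?thesis using eqpoll_imp_lepoll by blast
qed

lemma dense_A:
  fixes W :: "'w itself" and x :: "'w \<Rightarrow> real"
  assumes inf: "infinite (UNIV :: 'w set)" and ix: "inj x" and xr: "\<And>a. 0 \<le> x a \<and> x a \<le> 3"
  shows "omega1_dense W (\<Union>i\<in>PP. ee i ` range x)"
  unfolding omega1_dense_def
proof (intro allI impI)
  fix a b :: real assume ab: "a < b"
  define A where "A = (\<Union>i\<in>PP. ee i ` range x)"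
  obtain p' where p': "p' \<in> \<rat>" "a < p'" "p' < b" using Rats_dense_in_real[OF ab] by blast
  obtain q' where q': "q' \<in> \<rat>" "p' < q'" "q' < b" using Rats_dense_in_real[OF p'(3)] by blast
  obtain p where p: "p' = of_rat p" using p'(1) Rats_cases by blast
  obtain q where q: "q' = of_rat q" using q'(1) Rats_cases by blast
  have iP: "(p, q) \<in> PP" using p q q'(2) by (simp add: PP_def of_rat_less)
  have sub: "ee (p, q) ` range x \<subseteq> {a<..<b} \<inter> A"
  proof
    fix z assume "z \<in> ee (p, q) ` range x"
    then obtain w where w: "z = ee (p, q) (x w)" by blast
    have "p' < z" "z < q'" using ee_range[OF iP, of "x w"] xr[of w] w p q by auto
    then show "z \<in> {a<..<b} \<inter> A" using w iP p'(2) q'(3) by (auto simp: A_def)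
  qed
  have "inj (ee (p, q) \<circ> x)" using ee_inj[OF iP] ix by (simp add: inj_compose)
  then have l1: "(UNIV :: 'w set) \<lesssim> {a<..<b} \<inter> A"
    unfolding lepoll_def using sub by (intro exI[of _ "ee (p, q) \<circ> x"]) (auto simp: image_comp)
  have "{a<..<b} \<inter> A \<subseteq> (\<lambda>(i, w). ee i (x w)) ` (PP \<times> UNIV)" by (auto simp: A_def)
  then have "{a<..<b} \<inter> A \<lesssim> PP \<times> (UNIV :: 'w set)" by (rule subset_image_lepoll)
  also have "PP \<times> (UNIV :: 'w set) \<lesssim> (UNIV :: 'w set) \<times> (UNIV :: 'w set)"
  proof (rule times_lepoll_mono)
    have "PP \<lesssim> (UNIV :: nat set)"
      using countable_PP unfolding countable_def lepoll_def by blast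
    also have "(UNIV :: nat set) \<lesssim> (UNIV :: 'w set)" using inf infinite_le_lepoll by blast
    finally show "PP \<lesssim> (UNIV :: 'w set)" .
  qed simp
  also have "\<dots> \<lesssim> (UNIV :: 'w set)" by (rule infinite_times_self[OF inf])
  finally have l2: "{a<..<b} \<inter> A \<lesssim> (UNIV :: 'w set)" .
  show "{a<..<b} \<inter> (\<Union>i\<in>PP. ee i ` range x) \<approx> (UNIV :: 'w set)"
    using lepoll_antisym[OF l2 l1] by (simp add: A_def)
qed

lemma dense_neg:
  assumes "omega1_dense W A"
  shows "omega1_dense W (uminus ` A)"
  unfolding omega1_dense_def
proof (intro allI impI)
  fix a b :: real assume ab: "a < b"
  have "{a<..<b} \<inter> uminus ` A = uminus ` ({-b<..<-a} \<inter> A)" by force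
  moreover have "uminus ` ({-b<..<-a} \<inter> A) \<approx> {-b<..<-a} \<inter> A"
    by (rule inj_on_image_eqpoll_self) (simp add: inj_on_def)
  moreover have "{-b<..<-a} \<inter> A \<approx> (UNIV :: 'a set)"
    using assms ab unfolding omega1_dense_def by simp
  ultimately show "{a<..<b} \<inter> uminus ` A \<approx> (UNIV :: 'a set)" using eqpoll_trans by metis
qed



theorem mainTheorem14:
  fixes W :: "'w::wellorder itself"
  assumes omega1_uncountable: "uncountable (UNIV :: 'w set)"
    and omega1_segments: "\<forall>x::'w. countable {y. y < x}"
    and CA2: "CA W 2"
  shows "\<exists>A B :: real set. omega1_dense W A \<and> omega1_dense W B \<and> \<not> order_isomorphic A B"
proof -
  have inf: "infinite (UNIV :: 'w set)" using omega1_uncountable countable_finite by blast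
  have "\<exists>\<F> :: 'w set set. construction_scheme UNIV mm nn rr \<F> \<and> n_capturing 2 nn rr \<F>"
    using CA2[unfolded CA_def, rule_format, of mm nn rr] is_type_mnr by (simp add: nn_def)
  then obtain FF :: "'w set set" where csF: "construction_scheme UNIV mm nn rr FF"
    and cap: "n_capturing 2 nn rr FF" by blast
  interpret cs FF by (rule cs.intro) (rule csF)
  define A where "A = (\<Union>i\<in>PP. ee i ` range xx)"
  have dA: "omega1_dense W A" unfolding A_def by (rule dense_A[OF inf xx_inj]) (use xx_range in auto)
  have dB: "omega1_dense W (uminus ` A)" by (rule dense_neg[OF dA])
  have ni: "\<not> order_isomorphic A (uminus ` A)"
  proof
    assume "order_isomorphic A (uminus ` A)"
    then obtain f where fb: "bij_betw f A (uminus ` A)" and fm: "strict_mono_on A f"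
      unfolding order_isomorphic_def by blast
    define g where "g a = - f a" for a
    have gA: "g a \<in> A" if "a \<in> A" for a
    proof -
      have "f a \<in> uminus ` A" using fb that bij_betwE by blast
      then show ?thesis by (auto simp: g_def)
    qed
    have gdec: "g b < g a" if "a \<in> A" "b \<in> A" "a < b" for a b
      using strict_mono_onD[OF fm that] by (simp add: g_def)
    define i0 where "i0 = ((0::rat), (1::rat))"
    have i0P: "i0 \<in> PP" by (simp add: i0_def PP_def)
    have aA: "ee i0 (xx a) \<in> A" for a using i0P by (auto simp: A_def)
    have "\<forall>a. \<exists>p. fst p \<in> PP \<and> g (ee i0 (xx a)) = ee (fst p) (xx (snd p))"
    proof
      fix a
      have "g (ee i0 (xx a)) \<in> A" using gA aA by blast
      then obtain j b where "j \<in> PP" "g (ee i0 (xx a)) = ee j (xx b)" by (auto simp: A_def)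
      then show "\<exists>p. fst p \<in> PP \<and> g (ee i0 (xx a)) = ee (fst p) (xx (snd p))"
        by (intro exI[of _ "(j, b)"]) simp
    qed
    then obtain Q where Q: "\<And>a. fst (Q a) \<in> PP \<and> g (ee i0 (xx a)) = ee (fst (Q a)) (xx (snd (Q a)))"
      by metis
    define J where "J a = fst (Q a)" for a
    define H where "H a = snd (Q a)" for a
    have JH: "J a \<in> PP" "g (ee i0 (xx a)) = ee (J a) (xx (H a))" for a
      using Q[of a] by (auto simp: J_def H_def)
    have "\<exists>j\<in>PP. uncountable {a. J a = j}"
    proof (rule ccontr)
      assume "\<not> (\<exists>j\<in>PP. uncountable {a. J a = j})"
      then have "countable (\<Union>j\<in>PP. {a. J a = j})" using countable_PP by (intro countable_UN) auto
      moreover have "(\<Union>j\<in>PP. {a. J a = j}) = UNIV" using JH(1) by auto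
      ultimately show False using omega1_uncountable by simp
    qed
    then obtain j where jP: "j \<in> PP" and D0: "uncountable {a. J a = j}" by blast
    define D where "D = {a. J a = j}"
    have rel: "xx (H a') < xx (H a)" if "a \<in> D" "a' \<in> D" "xx a < xx a'" for a a'
    proof -
      have "ee i0 (xx a) < ee i0 (xx a')" using ee_mono[OF i0P that(3)] .
      then have "g (ee i0 (xx a')) < g (ee i0 (xx a))" using gdec aA by blast
      then have "ee j (xx (H a')) < ee j (xx (H a))" using JH(2) that(1,2) by (simp add: D_def)
      then show ?thesis using ee_mono_iff[OF jP] by simp
    qed
    have xne: "xx a \<noteq> xx a'" if "a \<noteq> a'" for a a' using xx_inj that by (meson injD)
    have injH: "a = a'" if "a \<in> D" "a' \<in> D" "H a = H a'" for a a'
    proof (rule ccontr)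
      assume "a \<noteq> a'"
      then have "xx a < xx a' \<or> xx a' < xx a" using xne by (meson linorder_neq_iff)
      then show False using rel that by (metis less_irrefl)
    qed
    define Dl where "Dl = {a \<in> D. a < H a}"
    define Dg where "Dg = {a \<in> D. H a < a}"
    define De where "De = {a \<in> D. H a = a}"
    have "countable De"
    proof (cases "De = {}")
      case False
      then obtain a where a: "a \<in> De" by blast
      have "De \<subseteq> {a}"
      proof
        fix a' assume a': "a' \<in> De"
        show "a' \<in> {a}"
        proof (rule ccontr)
          assume "a' \<notin> {a}"
          then have "xx a < xx a' \<or> xx a' < xx a" using xne by (metis linorder_neq_iff singletonI)
          then show False using rel a a' unfolding De_def by (metis (mono_tags, lifting) mem_Collect_eq less_asym)
        qed
      qed
      then show ?thesis using countable_subset by blast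
    qed simp
    moreover have "D \<subseteq> Dl \<union> Dg \<union> De" unfolding Dl_def Dg_def De_def using linorder_neq_iff by blast
    ultimately have "uncountable Dl \<or> uncountable Dg"
      using D0 unfolding D_def[symmetric] by (metis countable_Un countable_subset)
    then show False
    proof
      assume u: "uncountable Dl"
      show False
      proof (rule core[OF cap u, of "\<lambda>a. a" H])
        show "\<And>a. a \<in> Dl \<Longrightarrow> a < H a" by (simp add: Dl_def)
        show "inj_on (\<lambda>a. a) Dl" by (simp add: inj_on_def)
        show "inj_on H Dl" using injH by (auto simp: inj_on_def Dl_def)
        show "\<And>a a'. a \<in> Dl \<Longrightarrow> a' \<in> Dl \<Longrightarrow> a \<noteq> a' \<Longrightarrow> \<not> (xx a < xx a' \<and> xx (H a) < xx (H a'))"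
          using rel unfolding Dl_def by (metis (mono_tags, lifting) mem_Collect_eq less_asym)
      qed
    next
      assume u: "uncountable Dg"
      show False
      proof (rule core[OF cap u, of H "\<lambda>a. a"])
        show "\<And>a. a \<in> Dg \<Longrightarrow> H a < a" by (simp add: Dg_def)
        show "inj_on (\<lambda>a. a) Dg" by (simp add: inj_on_def)
        show "inj_on H Dg" using injH by (auto simp: inj_on_def Dg_def)
        show "\<And>a a'. a \<in> Dg \<Longrightarrow> a' \<in> Dg \<Longrightarrow> a \<noteq> a' \<Longrightarrow> \<not> (xx (H a) < xx (H a') \<and> xx a < xx a')"
          using rel unfolding Dg_def by (metis (mono_tags, lifting) mem_Collect_eq less_asym)
      qed
    qed
  qed
  show ?thesis using dA dB ni by blast
qed


end
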